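(* Let $F\subseteq\mathcal{O}_{C,O}(\tau)$ be the face given by $x_b=0$ for some $b\in C\setminus\{\hat{0}\}$, where $P_\tau=C\sqcup O$ is a $k$-decomposition. If $b\in Y^i$, then $F$ is affinely isomorphic to $\mathcal{O}_{\tilde{C},O}(\tilde{\tau})$, where \[ \tilde{\tau}=(\tau_1,\dots,\tau_{i-1},\tau_i-1,\tau_{i+1},\dots,\tau_\ell) \] and $\tilde{C}=C\setminus\{b\}$. If $\tau_i-1=0$, this zero entry is omitted from $\tilde{\tau}$ (i.e. the rank level disappears).
   Context: For $\tau=(\tau_1,\dots,\tau_\ell)\in\mathbb{Z}_{>0}^\ell$, $P_\tau$ is the maximal ranked poset having $\tau_i$ elements in rank $i$, where any two elements of distinct ranks are comparable; it is extended by a minimum $\hat{0}$ and a maximum $\hat{1}$. Let $Y^i$ denote the set of elements of rank $i$, with $Y^0=\{\hat{0}\}$ and $Y^{\ell+1}=\{\hat{1}\}$. For $0\le k\le\ell$, the $k$-decomposition is $P_\tau=C\sqcup O$ with $C=\bigcup_{i=0}^k Y^i$ and $O=\bigcup_{i=k+1}^{\ell+1}Y^i$. The chain-order polytope $\mathcal{O}_{C,O}(\tau)$ is defined by: $x_{\hat{0}}=0$, $x_{\hat{1}}=1$; $0\le x_p$ for each $p\in C$; $x_a\le x_b$ for each covering relation $a\prec b$ with $a,b\in O$; and $x_{p_1}+\dots+x_{p_k}\le x_{q}$ for any choice of $p_j\in Y^j$ ($1\le j\le k$) and $q\in Y^{k+1}$. Two polytopes are identified up to affine isomorphism. *)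

theory Defs
  imports Complex_Main
begin

text \<open>The element number j (0 <= j < tau_i) of rank i (1 <= i <= l) is encoded as the pair (i, j).
  The minimum 0hat and maximum 1hat carry the fixed coordinates 0 and 1 and are not
  coordinates of the ambient space; they are built into the constraints below.\<close>

definition elems :: "nat list \<Rightarrow> (nat \<times> nat) set" where
  "elems \<tau> = {(i, j). 1 \<le> i \<and> i \<le> length \<tau> \<and> j < \<tau> ! (i - 1)}"

text \<open>Chain-order polytope of the k-decomposition C = Y^0 u ... u Y^k, O = Y^(k+1) u ... u Y^(l+1).
  Points are real functions on pairs, vanishing outside elems tau (i.e. points of R^(P_tau)).
  Covering relations of P_tau are exactly the pairs of elements in consecutive ranks.\<close>

definition chain_order_polytope :: "nat list \<Rightarrow> nat \<Rightarrow> ((nat \<times> nat) \<Rightarrow> real) set" where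
  "chain_order_polytope \<tau> k = {x.
     (\<forall>p. p \<notin> elems \<tau> \<longrightarrow> x p = 0) \<and>
     \<comment> \<open>0 <= x_p for p in C (trivial for 0hat)\<close>
     (\<forall>i j. 1 \<le> i \<and> i \<le> k \<and> j < \<tau> ! (i - 1) \<longrightarrow> 0 \<le> x (i, j)) \<and>
     \<comment> \<open>x_a <= x_b for coverings a < b inside O between ranks i, i+1 with i+1 <= l\<close>
     (\<forall>i j j'. k + 1 \<le> i \<and> i < length \<tau> \<and> j < \<tau> ! (i - 1) \<and> j' < \<tau> ! i
         \<longrightarrow> x (i, j) \<le> x (i + 1, j')) \<and>
     \<comment> \<open>x_a <= x_1hat = 1 for a of rank l in O\<close>
     (\<forall>j. k + 1 \<le> length \<tau> \<and> j < \<tau> ! (length \<tau> - 1) \<longrightarrow> x (length \<tau>, j) \<le> 1) \<and>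
     \<comment> \<open>chain inequalities x_(p_1) + ... + x_(p_k) <= x_q, q in Y^(k+1)\<close>
     (\<forall>p :: nat \<Rightarrow> nat. (\<forall>r \<in> {1..k}. p r < \<tau> ! (r - 1)) \<longrightarrow>
        (if k < length \<tau>
         then (\<forall>q < \<tau> ! k. (\<Sum>r = 1..k. x (r, p r)) \<le> x (k + 1, q))
         else (\<Sum>r = 1..k. x (r, p r)) \<le> 1))}"

text \<open>Affine isomorphism of point sets P in R^E and Q in R^E' (E, E' finite coordinate sets,
  points represented as functions vanishing outside the coordinate set): there is an affine map
  R^E -> R^E' restricting to a bijection from P onto Q.  (An affine map injective on a convex
  set is injective on its affine hull, so this is the usual notion for polytopes.)\<close>

definition aff_isomorphic ::
  "'a set \<Rightarrow> ('a \<Rightarrow> real) set \<Rightarrow> 'b set \<Rightarrow> ('b \<Rightarrow> real) set \<Rightarrow> bool" where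
  "aff_isomorphic E P E' Q \<longleftrightarrow>
     (\<exists>(A :: 'b \<Rightarrow> 'a \<Rightarrow> real) (c :: 'b \<Rightarrow> real).
        let f = (\<lambda>x q. if q \<in> E' then c q + (\<Sum>p\<in>E. A q p * x p) else 0)
        in inj_on f P \<and> f ` P = Q)"

text \<open>tau-tilde: decrease tau_i by one, omitting the entry if it becomes 0;
  in the latter case C-tilde = C minus b is the (k-1)-decomposition.\<close>

definition tau_tilde :: "nat list \<Rightarrow> nat \<Rightarrow> nat list" where
  "tau_tilde \<tau> i = (if \<tau> ! (i - 1) = 1 then take (i - 1) \<tau> @ drop i \<tau>
                     else \<tau>[i - 1 := \<tau> ! (i - 1) - 1])"

definition k_tilde :: "nat list \<Rightarrow> nat \<Rightarrow> nat \<Rightarrow> nat" where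
  "k_tilde \<tau> k i = (if \<tau> ! (i - 1) = 1 then k - 1 else k)"

end

theory Submission
  imports Defs
begin

lemma finite_elems: "finite (elems \<tau>)"
proof -
  have "elems \<tau> \<subseteq> {1..length \<tau>} \<times> {..Max (insert 0 (set \<tau>))}"
  proof
    fix p assume "p \<in> elems \<tau>"
    then obtain a b where p: "p = (a,b)" "1 \<le> a" "a \<le> length \<tau>" "b < \<tau> ! (a - 1)"
      unfolding elems_def by auto
    have "\<tau> ! (a - 1) \<in> set \<tau>" using p by auto
    hence "\<tau> ! (a - 1) \<le> Max (insert 0 (set \<tau>))" by simp
    hence "b \<le> Max (insert 0 (set \<tau>))" using p(4) by linarith
    thus "p \<in> {1..length \<tau>} \<times> {..Max (insert 0 (set \<tau>))}" using p by auto
  qed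
  thus ?thesis by (rule finite_subset) auto
qed

lemma aff_iso_intro:
  fixes E :: "'a set" and E' :: "'b set" and \<sigma> :: "'b \<Rightarrow> 'a"
  assumes fin: "finite E"
    and sE: "\<And>q. q \<in> E' \<Longrightarrow> \<sigma> q \<in> E"
    and cov: "\<And>p. p \<in> E \<Longrightarrow> p \<noteq> b \<Longrightarrow> \<exists>q\<in>E'. \<sigma> q = p"
    and Fsub: "\<And>x. x \<in> F \<Longrightarrow> (\<forall>p. p \<notin> E \<longrightarrow> x p = 0) \<and> x b = 0"
    and fwd: "\<And>x. x \<in> F \<Longrightarrow> (\<lambda>q. if q \<in> E' then x (\<sigma> q) else 0) \<in> Q"
    and bwd: "\<And>y. y \<in> Q \<Longrightarrow> \<exists>x\<in>F. y = (\<lambda>q. if q \<in> E' then x (\<sigma> q) else 0)"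
  shows "aff_isomorphic E F E' Q"
proof -
  define A where "A = (\<lambda>q p. if p = \<sigma> q then (1::real) else 0)"
  define f where "f = (\<lambda>x q. if q \<in> E' then (0::real) + (\<Sum>p\<in>E. A q p * x p) else 0)"
  have feq: "f x = (\<lambda>q. if q \<in> E' then x (\<sigma> q) else 0)" for x
  proof
    fix q show "f x q = (if q \<in> E' then x (\<sigma> q) else 0)"
    proof (cases "q \<in> E'")
      case True
      have "(\<Sum>p\<in>E. A q p * x p) = (\<Sum>p\<in>E. if p = \<sigma> q then x p else 0)"
        unfolding A_def by (rule sum.cong) auto
      also have "\<dots> = x (\<sigma> q)" using fin sE[OF True] by (simp add: sum.delta)
      finally show ?thesis using True unfolding f_def by simp
    qed (simp add: f_def)
  qed
  have inj: "inj_on f F"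
  proof (rule inj_onI)
    fix x x' assume x: "x \<in> F" and x': "x' \<in> F" and e: "f x = f x'"
    show "x = x'"
    proof
      fix p
      show "x p = x' p"
      proof (cases "p \<in> E \<and> p \<noteq> b")
        case True
        then obtain q where q: "q \<in> E'" "\<sigma> q = p" using cov by blast
        have "f x q = f x' q" using e by simp
        thus ?thesis using q by (simp add: feq)
      next
        case False thus ?thesis using Fsub[OF x] Fsub[OF x'] by auto
      qed
    qed
  qed
  have img: "f ` F = Q"
  proof
    show "f ` F \<subseteq> Q" using fwd by (auto simp: feq)
    show "Q \<subseteq> f ` F"
    proof
      fix y assume "y \<in> Q"
      then obtain x where "x \<in> F" "y = (\<lambda>q. if q \<in> E' then x (\<sigma> q) else 0)" using bwd by blast
      thus "y \<in> f ` F" by (auto simp: feq)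
    qed
  qed
  show ?thesis unfolding aff_isomorphic_def Let_def
    apply (rule exI[of _ A], rule exI[of _ "\<lambda>_. 0"])
    using inj img unfolding f_def by simp
qed


lemma copD:
  assumes "x \<in> chain_order_polytope \<tau> k"
  shows "\<And>p. p \<notin> elems \<tau> \<Longrightarrow> x p = 0"
    and "\<And>i j. 1 \<le> i \<Longrightarrow> i \<le> k \<Longrightarrow> j < \<tau> ! (i - 1) \<Longrightarrow> 0 \<le> x (i, j)"
    and "\<And>i j j'. k + 1 \<le> i \<Longrightarrow> i < length \<tau> \<Longrightarrow> j < \<tau> ! (i - 1) \<Longrightarrow> j' < \<tau> ! i
         \<Longrightarrow> x (i, j) \<le> x (i + 1, j')"
    and "\<And>j. k + 1 \<le> length \<tau> \<Longrightarrow> j < \<tau> ! (length \<tau> - 1) \<Longrightarrow> x (length \<tau>, j) \<le> 1"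
    and "\<And>p q. (\<forall>r \<in> {1..k}. p r < \<tau> ! (r - 1)) \<Longrightarrow> k < length \<tau> \<Longrightarrow> q < \<tau> ! k \<Longrightarrow>
           (\<Sum>r = 1..k. x (r, p r)) \<le> x (k + 1, q)"
    and "\<And>p. (\<forall>r \<in> {1..k}. p r < \<tau> ! (r - 1)) \<Longrightarrow> \<not> k < length \<tau> \<Longrightarrow>
           (\<Sum>r = 1..k. x (r, p r)) \<le> 1"
  using assms unfolding chain_order_polytope_def by auto

lemma copI:
  assumes "\<And>p. p \<notin> elems \<tau> \<Longrightarrow> x p = 0"
    and "\<And>i j. 1 \<le> i \<Longrightarrow> i \<le> k \<Longrightarrow> j < \<tau> ! (i - 1) \<Longrightarrow> 0 \<le> x (i, j)"
    and "\<And>i j j'. k + 1 \<le> i \<Longrightarrow> i < length \<tau> \<Longrightarrow> j < \<tau> ! (i - 1) \<Longrightarrow> j' < \<tau> ! i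
         \<Longrightarrow> x (i, j) \<le> x (i + 1, j')"
    and "\<And>j. k + 1 \<le> length \<tau> \<Longrightarrow> j < \<tau> ! (length \<tau> - 1) \<Longrightarrow> x (length \<tau>, j) \<le> 1"
    and "\<And>p q. (\<forall>r \<in> {1..k}. p r < \<tau> ! (r - 1)) \<Longrightarrow> k < length \<tau> \<Longrightarrow> q < \<tau> ! k \<Longrightarrow>
           (\<Sum>r = 1..k. x (r, p r)) \<le> x (k + 1, q)"
    and "\<And>p. (\<forall>r \<in> {1..k}. p r < \<tau> ! (r - 1)) \<Longrightarrow> \<not> k < length \<tau> \<Longrightarrow>
           (\<Sum>r = 1..k. x (r, p r)) \<le> 1"
  shows "x \<in> chain_order_polytope \<tau> k"
  using assms unfolding chain_order_polytope_def by auto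

lemma elems_iff: "(a, b) \<in> elems \<tau> \<longleftrightarrow> 1 \<le> a \<and> a \<le> length \<tau> \<and> b < \<tau> ! (a - 1)"
  unfolding elems_def by auto

context
  fixes \<tau> :: "nat list" and k i j :: nat and \<tau>' and \<sigma>
  assumes k: "k \<le> length \<tau>" and i: "1 \<le> i" "i \<le> k" and j: "j < \<tau> ! (i - 1)"
    and ne1: "\<tau> ! (i - 1) \<noteq> 1"
  defines "\<tau>' \<equiv> \<tau>[i - 1 := \<tau> ! (i - 1) - 1]"
    and "\<sigma> \<equiv> (\<lambda>(a, b). if a = i \<and> j \<le> b then (a, Suc b) else (a, b))"
begin

lemma lenA: "length \<tau>' = length \<tau>" unfolding \<tau>'_def by simp

lemma nthA: "r < length \<tau> \<Longrightarrow> \<tau>' ! r = (if r = i - 1 then \<tau> ! (i - 1) - 1 else \<tau> ! r)"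
  unfolding \<tau>'_def by simp

lemma elemsA: "q \<in> elems \<tau>' \<Longrightarrow> \<sigma> q \<in> elems \<tau> \<and> fst (\<sigma> q) = fst q"
  using i k j unfolding \<sigma>_def by (cases q) (auto simp: elems_iff lenA nthA split: if_splits)

lemma fwdA:
  assumes x: "x \<in> chain_order_polytope \<tau> k" and x0: "x (i, j) = 0"
  shows "(\<lambda>q. if q \<in> elems \<tau>' then x (\<sigma> q) else 0) \<in> chain_order_polytope \<tau>' k"
    (is "?y \<in> _")
proof (rule copI)
  show "?y p = 0" if "p \<notin> elems \<tau>'" for p using that by simp
  show "0 \<le> ?y (r, s)" if "1 \<le> r" "r \<le> k" "s < \<tau>' ! (r - 1)" for r s
  proof (cases "(r, s) \<in> elems \<tau>'")
    case True
    then obtain s' where "\<sigma> (r, s) = (r, s')" "(r, s') \<in> elems \<tau>"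
      using elemsA by (metis fst_conv prod.collapse)
    then show ?thesis using True copD(2)[OF x, of r s'] that by (simp add: elems_iff)
  qed simp
  show "?y (r, s) \<le> ?y (r + 1, s')" if "k + 1 \<le> r" "r < length \<tau>'" "s < \<tau>' ! (r - 1)" "s' < \<tau>' ! r" for r s s'
    using that copD(3)[OF x, of r s s'] i k by (simp add: elems_iff lenA nthA \<sigma>_def split: if_splits)
  show "?y (length \<tau>', s) \<le> 1" if "k + 1 \<le> length \<tau>'" "s < \<tau>' ! (length \<tau>' - 1)" for s
    using that copD(4)[OF x, of s] i k by (simp add: elems_iff lenA nthA \<sigma>_def split: if_splits)
  fix p assume hp: "\<forall>r\<in>{1..k}. p r < \<tau>' ! (r - 1)"
  define p' where "p' r = (if r = i \<and> j \<le> p r then Suc (p r) else p r)" for r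
  have hp': "\<forall>r\<in>{1..k}. p' r < \<tau> ! (r - 1)"
  proof
    fix r assume r: "r \<in> {1..k}"
    have "p r < \<tau>' ! (r - 1)" using hp r by blast
    moreover have "\<tau>' ! (r - 1) = (if r = i then \<tau> ! (i - 1) - 1 else \<tau> ! (r - 1))"
      using r k i by (subst nthA) auto
    ultimately show "p' r < \<tau> ! (r - 1)" unfolding p'_def by (auto split: if_splits)
  qed
  have sumeq: "(\<Sum>r = 1..k. ?y (r, p r)) = (\<Sum>r = 1..k. x (r, p' r))"
  proof (rule sum.cong)
    fix r assume r: "r \<in> {1..k}"
    hence "(r, p r) \<in> elems \<tau>'" using hp k by (simp add: elems_iff lenA)
    thus "?y (r, p r) = x (r, p' r)" by (auto simp add: \<sigma>_def p'_def)
  qed simp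
  show "(\<Sum>r = 1..k. ?y (r, p r)) \<le> ?y (k + 1, q)" if "k < length \<tau>'" "q < \<tau>' ! k" for q
  proof -
    have "(k + 1, q) \<in> elems \<tau>'" using that by (simp add: elems_iff)
    moreover have "\<tau>' ! k = \<tau> ! k" using that i by (subst nthA) (auto simp: lenA)
    ultimately show ?thesis using sumeq copD(5)[OF x hp', of q] that i by (simp add: \<sigma>_def lenA)
  qed
  show "(\<Sum>r = 1..k. ?y (r, p r)) \<le> 1" if "\<not> k < length \<tau>'"
    using sumeq copD(6)[OF x hp'] that by (simp add: lenA)
qed

definition "\<rho>A = (\<lambda>(a, b). if a = i \<and> j < b then (a, b - 1) else (a, (b::nat)))"

lemma rhoA: "p \<in> elems \<tau> \<Longrightarrow> p \<noteq> (i, j) \<Longrightarrow> \<rho>A p \<in> elems \<tau>' \<and> \<sigma> (\<rho>A p) = p \<and> fst (\<rho>A p) = fst p"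
  using i k j unfolding \<sigma>_def \<rho>A_def
  by (cases p) (auto simp: elems_iff lenA nthA split: if_splits)

lemma bwdA:
  assumes y: "y \<in> chain_order_polytope \<tau>' k"
  defines "x \<equiv> (\<lambda>p. if p \<in> elems \<tau> \<and> p \<noteq> (i, j) then y (\<rho>A p) else 0)"
  shows "x \<in> chain_order_polytope \<tau> k" "x (i, j) = 0"
    "y = (\<lambda>q. if q \<in> elems \<tau>' then x (\<sigma> q) else 0)"
proof -
  show "x (i, j) = 0" unfolding x_def by simp
  have nn: "0 \<le> x (r, s)" if "1 \<le> r" "r \<le> k" for r s
  proof (cases "(r, s) \<in> elems \<tau> \<and> (r, s) \<noteq> (i, j)")
    case True
    then obtain s' where "\<rho>A (r, s) = (r, s')" "(r, s') \<in> elems \<tau>'"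
      using rhoA by (metis fst_conv prod.collapse)
    then show ?thesis using True copD(2)[OF y, of r s'] that by (simp add: elems_iff x_def)
  qed (auto simp: x_def)
  have ch: "(\<Sum>r = 1..k. x (r, p r)) \<le> (if k < length \<tau> then x (k + 1, q) else 1)"
    if hp: "\<forall>r\<in>{1..k}. p r < \<tau> ! (r - 1)" and pi: "p i \<noteq> j" and q: "k < length \<tau> \<longrightarrow> q < \<tau> ! k" for p q
  proof -
    define p'' where "p'' r = (if r = i \<and> j < p r then p r - 1 else p r)" for r
    have hp'': "\<forall>r\<in>{1..k}. p'' r < \<tau>' ! (r - 1)"
    proof
      fix r assume r: "r \<in> {1..k}"
      have "p r < \<tau> ! (r - 1)" using hp r by blast
      moreover have "\<tau>' ! (r - 1) = (if r = i then \<tau> ! (i - 1) - 1 else \<tau> ! (r - 1))"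
        using r k i by (subst nthA) auto
      ultimately show "p'' r < \<tau>' ! (r - 1)" unfolding p''_def using pi j by (auto split: if_splits)
    qed
    have sumeq: "(\<Sum>r = 1..k. x (r, p r)) = (\<Sum>r = 1..k. y (r, p'' r))"
    proof (rule sum.cong)
      fix r assume r: "r \<in> {1..k}"
      hence "(r, p r) \<in> elems \<tau>" using hp k by (simp add: elems_iff)
      thus "x (r, p r) = y (r, p'' r)" using pi by (auto simp add: x_def \<rho>A_def p''_def)
    qed simp
    show ?thesis
    proof (cases "k < length \<tau>")
      case True
      have "(k + 1, q) \<in> elems \<tau>" using True q by (simp add: elems_iff)
      moreover have "\<tau>' ! k = \<tau> ! k" using True i by (subst nthA) auto
      ultimately show ?thesis using sumeq copD(5)[OF y hp'', of q] True q i
        by (simp add: x_def \<rho>A_def lenA)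
    next
      case False
      thus ?thesis using sumeq copD(6)[OF y hp''] by (simp add: lenA)
    qed
  qed
  have ch2: "(\<Sum>r = 1..k. x (r, p r)) \<le> (if k < length \<tau> then x (k + 1, q) else 1)"
    if hp: "\<forall>r\<in>{1..k}. p r < \<tau> ! (r - 1)" and q: "k < length \<tau> \<longrightarrow> q < \<tau> ! k" for p q
  proof (cases "p i = j")
    case False show ?thesis by (rule ch[OF hp False q])
  next
    case True
    define j' where "j' = (if j = 0 then 1 else (0::nat))"
    define p2 where "p2 = p(i := j')"
    have j'lt: "j' < \<tau> ! (i - 1)" using j ne1 unfolding j'_def by auto
    have hp2: "\<forall>r\<in>{1..k}. p2 r < \<tau> ! (r - 1)" using hp j'lt unfolding p2_def by auto
    have "(\<Sum>r = 1..k. x (r, p r)) \<le> (\<Sum>r = 1..k. x (r, p2 r))"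
    proof (rule sum_mono)
      fix r assume r: "r \<in> {1..k}"
      show "x (r, p r) \<le> x (r, p2 r)"
      proof (cases "r = i")
        case True thus ?thesis using \<open>p i = j\<close> nn[of i j'] i \<open>x (i, j) = 0\<close> by (simp add: p2_def)
      qed (simp add: p2_def)
    qed
    also have "\<dots> \<le> (if k < length \<tau> then x (k + 1, q) else 1)"
      by (rule ch[OF hp2 _ q]) (simp add: p2_def j'_def)
    finally show ?thesis .
  qed
  show "x \<in> chain_order_polytope \<tau> k"
  proof (rule copI)
    show "x p = 0" if "p \<notin> elems \<tau>" for p using that by (simp add: x_def)
    show "0 \<le> x (r, s)" if "1 \<le> r" "r \<le> k" "s < \<tau> ! (r - 1)" for r s using nn that by simp
    show "x (r, s) \<le> x (r + 1, s')" if "k + 1 \<le> r" "r < length \<tau>" "s < \<tau> ! (r - 1)" "s' < \<tau> ! r" for r s s'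
    proof -
      have "\<tau>' ! (r - 1) = \<tau> ! (r - 1)" "\<tau>' ! r = \<tau> ! r" using that i by (subst nthA; auto)+
      thus ?thesis using that copD(3)[OF y, of r s s'] i by (simp add: elems_iff lenA x_def \<rho>A_def)
    qed
    show "x (length \<tau>, s) \<le> 1" if "k + 1 \<le> length \<tau>" "s < \<tau> ! (length \<tau> - 1)" for s
    proof -
      have "\<tau>' ! (length \<tau> - 1) = \<tau> ! (length \<tau> - 1)" using that i by (subst nthA; auto)+
      thus ?thesis using that copD(4)[OF y, of s] i by (simp add: elems_iff lenA x_def \<rho>A_def)
    qed
    show "(\<Sum>r = 1..k. x (r, p r)) \<le> x (k + 1, q)" if "\<forall>r\<in>{1..k}. p r < \<tau> ! (r - 1)" "k < length \<tau>" "q < \<tau> ! k" for p q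
      using ch2[OF that(1), of q] that by simp
    show "(\<Sum>r = 1..k. x (r, p r)) \<le> 1" if "\<forall>r\<in>{1..k}. p r < \<tau> ! (r - 1)" "\<not> k < length \<tau>" for p
      using ch2[OF that(1), of 0] that by simp
  qed
  show "y = (\<lambda>q. if q \<in> elems \<tau>' then x (\<sigma> q) else 0)"
  proof
    fix q show "y q = (if q \<in> elems \<tau>' then x (\<sigma> q) else 0)"
    proof (cases "q \<in> elems \<tau>'")
      case True
      have "\<sigma> q \<in> elems \<tau>" "\<sigma> q \<noteq> (i, j)" "\<rho>A (\<sigma> q) = q"
        using True elemsA i k j unfolding \<sigma>_def \<rho>A_def
        by (cases q; auto simp: elems_iff lenA nthA split: if_splits)+
      thus ?thesis using True by (simp add: x_def)
    next
      case False thus ?thesis using copD(1)[OF y] by simp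
    qed
  qed
qed

end

lemma sum_skip:
  fixes g :: "nat \<Rightarrow> real"
  assumes "1 \<le> i" "i \<le> k" "g i = 0"
  shows "(\<Sum>r = 1..k. g r) = (\<Sum>r = 1..k - 1. g (if r < i then r else Suc r))"
proof -
  define h where "h r = (if r < i then r else Suc r)" for r
  have "(\<Sum>r = 1..k. g r) = g i + (\<Sum>r \<in> {1..k} - {i}. g r)"
    using assms by (subst sum.remove[of _ i]) auto
  also have "{1..k} - {i} = h ` {1..k - 1}"
  proof
    show "{1..k} - {i} \<subseteq> h ` {1..k - 1}"
    proof
      fix r assume r: "r \<in> {1..k} - {i}"
      show "r \<in> h ` {1..k - 1}"
      proof (cases "r < i")
        case True thus ?thesis using r assms by (intro image_eqI[of _ _ r]) (auto simp: h_def)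
      next
        case False thus ?thesis using r assms by (intro image_eqI[of _ _ "r - 1"]) (auto simp: h_def)
      qed
    qed
    show "h ` {1..k - 1} \<subseteq> {1..k} - {i}" using assms by (auto simp: h_def)
  qed
  also have "inj_on h {1..k - 1}" by (rule inj_onI) (auto simp: h_def split: if_splits)
  hence "(\<Sum>r \<in> h ` {1..k - 1}. g r) = (\<Sum>r = 1..k - 1. g (h r))" by (rule sum.reindex_cong) auto
  finally show ?thesis using assms by (simp add: h_def)
qed

context
  fixes \<tau> :: "nat list" and k i :: nat and \<tau>' and h g
  assumes k: "k \<le> length \<tau>" and i: "1 \<le> i" "i \<le> k" and one: "\<tau> ! (i - 1) = 1"
  defines "\<tau>' \<equiv> take (i - 1) \<tau> @ drop i \<tau>"
    and "h \<equiv> (\<lambda>a::nat. if a < i then a else Suc a)"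
    and "g \<equiv> (\<lambda>a::nat. if i < a then a - 1 else a)"
begin

lemma lenB: "length \<tau>' = length \<tau> - 1" unfolding \<tau>'_def using i k by simp

lemma nthB: "r < length \<tau> - 1 \<Longrightarrow> \<tau>' ! r = \<tau> ! (h (Suc r) - 1)"
  unfolding \<tau>'_def h_def using i k by (auto simp: nth_append min_def)

lemma elemsB: "(a, b) \<in> elems \<tau>' \<longleftrightarrow> 1 \<le> a \<and> (h a, b) \<in> elems \<tau>"
proof -
  have "a \<le> length \<tau> - 1 \<and> b < \<tau>' ! (a - 1) \<longleftrightarrow> h a \<le> length \<tau> \<and> b < \<tau> ! (h a - 1)" if "1 \<le> a"
  proof (cases "a \<le> length \<tau> - 1")
    case True
    hence "\<tau>' ! (a - 1) = \<tau> ! (h a - 1)" using that by (subst nthB) (auto simp: h_def)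
    thus ?thesis using True that i k by (auto simp: h_def)
  next
    case False thus ?thesis using that i k by (auto simp: h_def)
  qed
  thus ?thesis by (auto simp: elems_iff lenB h_def)
qed

lemma hi: "h a \<noteq> i" "1 \<le> a \<Longrightarrow> 1 \<le> h a" "g (h a) = a" "a \<noteq> i \<Longrightarrow> h (g a) = a" "1 \<le> a \<Longrightarrow> a \<noteq> i \<Longrightarrow> 1 \<le> g a"
  using i by (auto simp: h_def g_def)

lemma elems_i: "(i, b) \<in> elems \<tau> \<Longrightarrow> b = 0"
  using one by (simp add: elems_iff)

lemma fwdB:
  assumes x: "x \<in> chain_order_polytope \<tau> k" and x0: "x (i, 0) = 0"
  shows "(\<lambda>q. if q \<in> elems \<tau>' then x (h (fst q), snd q) else 0) \<in> chain_order_polytope \<tau>' (k - 1)"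
    (is "?y \<in> _")
proof (rule copI)
  show "?y p = 0" if "p \<notin> elems \<tau>'" for p using that by simp
  show "0 \<le> ?y (r, s)" if "1 \<le> r" "r \<le> k - 1" "s < \<tau>' ! (r - 1)" for r s
  proof (cases "(r, s) \<in> elems \<tau>'")
    case True
    hence "(h r, s) \<in> elems \<tau>" using elemsB by blast
    moreover have "h r \<le> k" using that i by (auto simp: h_def)
    ultimately show ?thesis using True copD(2)[OF x, of "h r" s] that by (simp add: elems_iff)
  qed simp
  show "?y (r, s) \<le> ?y (r + 1, s')" if "k - 1 + 1 \<le> r" "r < length \<tau>'" "s < \<tau>' ! (r - 1)" "s' < \<tau>' ! r" for r s s'
  proof -
    have e1: "(r, s) \<in> elems \<tau>'" "(r + 1, s') \<in> elems \<tau>'" using that by (auto simp: elems_iff)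
    have hr: "h r = r + 1" "h (r + 1) = r + 2" using that i by (auto simp: h_def)
    have "(r + 1, s) \<in> elems \<tau>" "(r + 2, s') \<in> elems \<tau>" using e1 elemsB hr by auto
    thus ?thesis using e1 hr copD(3)[OF x, of "r + 1" s s'] that i by (simp add: elems_iff)
  qed
  show "?y (length \<tau>', s) \<le> 1" if "k - 1 + 1 \<le> length \<tau>'" "s < \<tau>' ! (length \<tau>' - 1)" for s
  proof -
    have e1: "(length \<tau>', s) \<in> elems \<tau>'" using that by (auto simp: elems_iff)
    have hr: "h (length \<tau>') = length \<tau>" using that i k by (auto simp: h_def lenB)
    have "(length \<tau>, s) \<in> elems \<tau>" using e1 elemsB hr by auto
    thus ?thesis using e1 hr copD(4)[OF x, of s] that i by (simp add: elems_iff lenB)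
  qed
  fix p assume hp: "\<forall>r\<in>{1..k - 1}. p r < \<tau>' ! (r - 1)"
  define p' where "p' r = (if r < i then p r else if r = i then 0 else p (r - 1))" for r
  have hp': "\<forall>r\<in>{1..k}. p' r < \<tau> ! (r - 1)"
  proof
    fix r assume r: "r \<in> {1..k}"
    show "p' r < \<tau> ! (r - 1)"
    proof (cases "r = i")
      case True thus ?thesis using one by (simp add: p'_def)
    next
      case False
      hence "1 \<le> g r" "g r \<in> {1..k - 1}" using r i by (auto simp: g_def)
      hence "(g r, p (g r)) \<in> elems \<tau>'" using hp k by (auto simp: elems_iff lenB)
      hence "(h (g r), p (g r)) \<in> elems \<tau>" using elemsB by blast
      thus ?thesis using False hi(4)[OF False] by (auto simp: p'_def g_def elems_iff split: if_splits)
    qed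
  qed
  have sumeq: "(\<Sum>r = 1..k - 1. ?y (r, p r)) = (\<Sum>r = 1..k. x (r, p' r))"
  proof -
    have "(\<Sum>r = 1..k. x (r, p' r)) = (\<Sum>r = 1..k - 1. x (h r, p' (h r)))"
      using sum_skip[of i k "\<lambda>r. x (r, p' r)"] i x0 by (simp add: p'_def h_def)
    also have "\<dots> = (\<Sum>r = 1..k - 1. ?y (r, p r))"
    proof (rule sum.cong)
      fix r assume r: "r \<in> {1..k - 1}"
      hence "(r, p r) \<in> elems \<tau>'" using hp k by (auto simp: elems_iff lenB)
      thus "x (h r, p' (h r)) = ?y (r, p r)" by (simp add: p'_def h_def)
    qed simp
    finally show ?thesis by simp
  qed
  show "(\<Sum>r = 1..k - 1. ?y (r, p r)) \<le> ?y (k - 1 + 1, q)" if "k - 1 < length \<tau>'" "q < \<tau>' ! (k - 1)" for q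
  proof -
    have e1: "(k, q) \<in> elems \<tau>'" using that i by (auto simp: elems_iff)
    have hr: "h k = k + 1" using i by (simp add: h_def)
    have "(k + 1, q) \<in> elems \<tau>" using e1 elemsB hr by auto
    hence "k < length \<tau>" "q < \<tau> ! k" by (auto simp: elems_iff)
    thus ?thesis using sumeq copD(5)[OF x hp', of q] e1 hr i by simp
  qed
  show "(\<Sum>r = 1..k - 1. ?y (r, p r)) \<le> 1" if "\<not> k - 1 < length \<tau>'"
  proof -
    have "k = length \<tau>" using that i k by (simp add: lenB)
    thus ?thesis using sumeq copD(6)[OF x hp'] by simp
  qed
qed

lemma rhoB: "p \<in> elems \<tau> \<Longrightarrow> p \<noteq> (i, 0) \<Longrightarrow> (g (fst p), snd p) \<in> elems \<tau>' \<and> h (g (fst p)) = fst p"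
proof -
  assume p: "p \<in> elems \<tau>" "p \<noteq> (i, 0)"
  obtain a b where ab: "p = (a, b)" by (cases p)
  have "a \<noteq> i" using p ab elems_i by auto
  moreover have "1 \<le> a" using p ab by (simp add: elems_iff)
  ultimately show ?thesis using p ab hi(4,5) elemsB by auto
qed

lemma bwdB:
  assumes y: "y \<in> chain_order_polytope \<tau>' (k - 1)"
  defines "x \<equiv> (\<lambda>p. if p \<in> elems \<tau> \<and> p \<noteq> (i, 0) then y (g (fst p), snd p) else 0)"
  shows "x \<in> chain_order_polytope \<tau> k" "x (i, 0) = 0"
    "y = (\<lambda>q. if q \<in> elems \<tau>' then x (h (fst q), snd q) else 0)"
proof -
  show x0: "x (i, 0) = 0" unfolding x_def by simp
  have xg: "x (r, s) = y (g r, s)" if "(r, s) \<in> elems \<tau>" "r \<noteq> i" for r s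
    using that by (simp add: x_def)
  show "x \<in> chain_order_polytope \<tau> k"
  proof (rule copI)
    show "x p = 0" if "p \<notin> elems \<tau>" for p using that by (simp add: x_def)
    show "0 \<le> x (r, s)" if "1 \<le> r" "r \<le> k" "s < \<tau> ! (r - 1)" for r s
    proof (cases "r = i")
      case True thus ?thesis using that one by (simp add: x_def)
    next
      case False
      have e: "(r, s) \<in> elems \<tau>" using that k by (simp add: elems_iff)
      hence "(g r, s) \<in> elems \<tau>'" using rhoB[OF e] False by simp
      moreover have "g r \<le> k - 1" "1 \<le> g r" using that False i by (auto simp: g_def)
      ultimately show ?thesis using xg[OF e False] copD(2)[OF y, of "g r" s] by (simp add: elems_iff)
    qed
    show "x (r, s) \<le> x (r + 1, s')" if "k + 1 \<le> r" "r < length \<tau>" "s < \<tau> ! (r - 1)" "s' < \<tau> ! r" for r s s'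
    proof -
      have e: "(r, s) \<in> elems \<tau>" "(r + 1, s') \<in> elems \<tau>" using that by (auto simp: elems_iff)
      have ne: "r \<noteq> i" "r + 1 \<noteq> i" using that i by auto
      have gr: "g r = r - 1" "g (r + 1) = r" using that i by (auto simp: g_def)
      have "(r - 1, s) \<in> elems \<tau>'" "(r, s') \<in> elems \<tau>'" using rhoB[OF e(1)] rhoB[OF e(2)] ne gr by auto
      hence "y (r - 1, s) \<le> y (r - 1 + 1, s')"
        using copD(3)[OF y, of "r - 1" s s'] that i by (auto simp: elems_iff)
      thus ?thesis using xg[OF e(1) ne(1)] xg[OF e(2) ne(2)] gr that i by simp
    qed
    show "x (length \<tau>, s) \<le> 1" if "k + 1 \<le> length \<tau>" "s < \<tau> ! (length \<tau> - 1)" for s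
    proof -
      have e: "(length \<tau>, s) \<in> elems \<tau>" using that by (auto simp: elems_iff)
      have ne: "length \<tau> \<noteq> i" using that i by auto
      have gr: "g (length \<tau>) = length \<tau>'" using that i by (auto simp: g_def lenB)
      have "(length \<tau>', s) \<in> elems \<tau>'" using rhoB[OF e] ne gr by auto
      hence "y (length \<tau>', s) \<le> 1"
        using copD(4)[OF y, of s] that i by (auto simp: elems_iff lenB)
      thus ?thesis using xg[OF e ne] gr by simp
    qed
    fix p assume hp: "\<forall>r\<in>{1..k}. p r < \<tau> ! (r - 1)"
    define p'' where "p'' r = p (h r)" for r
    have sumeq: "(\<Sum>r = 1..k. x (r, p r)) = (\<Sum>r = 1..k - 1. y (r, p'' r))"
    proof -
      have "p i < \<tau> ! (i - 1)" using hp i by auto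
      hence "p i = 0" using one by simp
      hence "(\<Sum>r = 1..k. x (r, p r)) = (\<Sum>r = 1..k - 1. x (h r, p (h r)))"
        using sum_skip[of i k "\<lambda>r. x (r, p r)"] i x0 by (simp add: h_def)
      also have "\<dots> = (\<Sum>r = 1..k - 1. y (r, p'' r))"
      proof (rule sum.cong)
        fix r assume r: "r \<in> {1..k - 1}"
        have "h r \<in> {1..k}" using r i by (auto simp: h_def)
        hence "(h r, p (h r)) \<in> elems \<tau>" using hp k by (auto simp: elems_iff)
        thus "x (h r, p (h r)) = y (r, p'' r)" using xg hi(1,3) by (simp add: p''_def)
      qed simp
      finally show ?thesis .
    qed
    have hp'': "\<forall>r\<in>{1..k - 1}. p'' r < \<tau>' ! (r - 1)"
    proof
      fix r assume r: "r \<in> {1..k - 1}"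
      have "h r \<in> {1..k}" using r i by (auto simp: h_def)
      hence "(h r, p (h r)) \<in> elems \<tau>" using hp k by (auto simp: elems_iff)
      hence "(r, p'' r) \<in> elems \<tau>'" using elemsB r by (simp add: p''_def)
      thus "p'' r < \<tau>' ! (r - 1)" by (simp add: elems_iff)
    qed
    show "(\<Sum>r = 1..k. x (r, p r)) \<le> x (k + 1, q)" if "k < length \<tau>" "q < \<tau> ! k" for q
    proof -
      have e: "(k + 1, q) \<in> elems \<tau>" using that by (auto simp: elems_iff)
      have ne: "k + 1 \<noteq> i" using i by auto
      have gr: "g (k + 1) = k" using i by (auto simp: g_def)
      have "(k, q) \<in> elems \<tau>'" using rhoB[OF e] ne gr by auto
      hence "k - 1 < length \<tau>'" "q < \<tau>' ! (k - 1)" using i by (auto simp: elems_iff)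
      hence "(\<Sum>r = 1..k - 1. y (r, p'' r)) \<le> y (k - 1 + 1, q)" using copD(5)[OF y hp''] by blast
      thus ?thesis using sumeq xg[OF e ne] gr i by simp
    qed
    show "(\<Sum>r = 1..k. x (r, p r)) \<le> 1" if "\<not> k < length \<tau>"
    proof -
      have "\<not> k - 1 < length \<tau>'" using that i k by (simp add: lenB)
      thus ?thesis using sumeq copD(6)[OF y hp''] by simp
    qed
  qed
  show "y = (\<lambda>q. if q \<in> elems \<tau>' then x (h (fst q), snd q) else 0)"
  proof
    fix q show "y q = (if q \<in> elems \<tau>' then x (h (fst q), snd q) else 0)"
    proof (cases "q \<in> elems \<tau>'")
      case True
      obtain a b where ab: "q = (a, b)" by (cases q)
      have "(h a, b) \<in> elems \<tau>" using True ab elemsB by blast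
      thus ?thesis using True ab xg hi(1,3) by simp
    next
      case False thus ?thesis using copD(1)[OF y] by simp
    qed
  qed
qed

end

theorem proposition3p6:
  fixes \<tau> :: "nat list" and k i j :: nat
  assumes "\<forall>t \<in> set \<tau>. 0 < t"
    and "k \<le> length \<tau>"
    and "1 \<le> i" and "i \<le> k"
    and "j < \<tau> ! (i - 1)"
  shows "aff_isomorphic (elems \<tau>) {x \<in> chain_order_polytope \<tau> k. x (i, j) = 0}
           (elems (tau_tilde \<tau> i)) (chain_order_polytope (tau_tilde \<tau> i) (k_tilde \<tau> k i))"
proof (cases "\<tau> ! (i - 1) = 1")
  case True
  have j0: "j = 0" using assms(5) True by simp
  have tt: "tau_tilde \<tau> i = take (i - 1) \<tau> @ drop i \<tau>" "k_tilde \<tau> k i = k - 1"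
    using True by (simp_all add: tau_tilde_def k_tilde_def)
  let ?h = "\<lambda>a::nat. if a < i then a else Suc a"
  let ?g = "\<lambda>a::nat. if i < a then a - 1 else a"
  show ?thesis unfolding tt j0
  proof (rule aff_iso_intro[where \<sigma> = "\<lambda>q. (?h (fst q), snd q)" and b = "(i, 0)"])
    show "finite (elems \<tau>)" by (rule finite_elems)
    show "(?h (fst q), snd q) \<in> elems \<tau>" if "q \<in> elems (take (i - 1) \<tau> @ drop i \<tau>)" for q
      using that elemsB[OF assms(2-4) True, of "fst q" "snd q"] by simp
    show "\<exists>q\<in>elems (take (i - 1) \<tau> @ drop i \<tau>). (?h (fst q), snd q) = p"
      if "p \<in> elems \<tau>" "p \<noteq> (i, 0)" for p
      using rhoB[OF assms(2-4) True that] by (intro bexI[of _ "(?g (fst p), snd p)"]) auto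
    show "(\<forall>p. p \<notin> elems \<tau> \<longrightarrow> x p = 0) \<and> x (i, 0) = 0"
      if "x \<in> {x \<in> chain_order_polytope \<tau> k. x (i, 0) = 0}" for x
      using that copD(1) by blast
    show "(\<lambda>q. if q \<in> elems (take (i - 1) \<tau> @ drop i \<tau>) then x (?h (fst q), snd q) else 0)
          \<in> chain_order_polytope (take (i - 1) \<tau> @ drop i \<tau>) (k - 1)"
      if "x \<in> {x \<in> chain_order_polytope \<tau> k. x (i, 0) = 0}" for x
      using that fwdB[OF assms(2-4) True] by blast
    show "\<exists>x\<in>{x \<in> chain_order_polytope \<tau> k. x (i, 0) = 0}.
            y = (\<lambda>q. if q \<in> elems (take (i - 1) \<tau> @ drop i \<tau>) then x (?h (fst q), snd q) else 0)"
      if "y \<in> chain_order_polytope (take (i - 1) \<tau> @ drop i \<tau>) (k - 1)" for y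
      using bwdB[OF assms(2-4) True that]
      by (intro bexI[of _ "\<lambda>p. if p \<in> elems \<tau> \<and> p \<noteq> (i, 0) then y (?g (fst p), snd p) else 0"]) simp_all
  qed
next
  case False
  have tt: "tau_tilde \<tau> i = \<tau>[i - 1 := \<tau> ! (i - 1) - 1]" "k_tilde \<tau> k i = k"
    using False by (simp_all add: tau_tilde_def k_tilde_def)
  let ?s = "\<lambda>(a, b). if a = i \<and> j \<le> b then (a, Suc b) else (a, b)"
  let ?t = "\<tau>[i - 1 := \<tau> ! (i - 1) - 1]"
  show ?thesis unfolding tt
  proof (rule aff_iso_intro[where \<sigma> = ?s and b = "(i, j)"])
    show "finite (elems \<tau>)" by (rule finite_elems)
    show "?s q \<in> elems \<tau>" if "q \<in> elems ?t" for q
      using that elemsA[OF assms(2-5) False] by blast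
    show "\<exists>q\<in>elems ?t. ?s q = p" if "p \<in> elems \<tau>" "p \<noteq> (i, j)" for p
      using rhoA[OF assms(2-5) False that] by blast
    show "(\<forall>p. p \<notin> elems \<tau> \<longrightarrow> x p = 0) \<and> x (i, j) = 0"
      if "x \<in> {x \<in> chain_order_polytope \<tau> k. x (i, j) = 0}" for x
      using that copD(1) by blast
    show "(\<lambda>q. if q \<in> elems ?t then x (?s q) else 0) \<in> chain_order_polytope ?t k"
      if "x \<in> {x \<in> chain_order_polytope \<tau> k. x (i, j) = 0}" for x
      using that fwdA[OF assms(2-5) False] by blast
    show "\<exists>x\<in>{x \<in> chain_order_polytope \<tau> k. x (i, j) = 0}.
            y = (\<lambda>q. if q \<in> elems ?t then x (?s q) else 0)"
      if "y \<in> chain_order_polytope ?t k" for y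
      using bwdA[OF assms(2-5) False that]
      by (intro bexI[of _ "\<lambda>p. if p \<in> elems \<tau> \<and> p \<noteq> (i, j) then y (\<rho>A i j p) else 0"]) simp_all
  qed
qed

end
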